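(* Let $(R,\mathfrak{m})$ be a Noetherian local ring, $M$ a finitely generated $R$-module, and $S \subseteq M$ a subset. Let $I(S,M) := \{y \in \langle S \rangle \mid f(y) \in \mathfrak{m} \text{ for all } f \in \mathrm{Hom}_R(M,R)\}$, an $R$-submodule of $\langle S \rangle$. Then $\delta_\mathfrak{m}(S,M) = \lambda_R(\langle S \rangle / I(S,M))$, where $\lambda_R$ denotes length.
   Context: $\langle S\rangle$ denotes the $R$-submodule of $M$ generated by $S$. $\delta_\mathfrak{m}(S,M)$ is the largest integer $n \ge 0$ such that there is a free $R$-submodule $G \subseteq \langle S\rangle$ of rank $n$ which is a direct summand of $M$. *)

theory Defs
  imports Main "HOL-Library.Extended_Nat"
begin

text \<open>Modules over a commutative ring R (a type of class comm_ring_1) are modelled by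
  the library locale module with scalar multiplication sc; the module M is the
  whole type 'm.\<close>

definition ideal_of :: "'a::comm_ring_1 set \<Rightarrow> bool" where
  "ideal_of J \<longleftrightarrow> module.subspace ((*) :: 'a \<Rightarrow> 'a \<Rightarrow> 'a) J"

definition maximal_ideal :: "'a::comm_ring_1 set \<Rightarrow> bool" where
  "maximal_ideal J \<longleftrightarrow> ideal_of J \<and> J \<noteq> UNIV \<and>
     (\<forall>K. ideal_of K \<longrightarrow> J \<subseteq> K \<longrightarrow> K = J \<or> K = UNIV)"

definition noetherian_ring :: "'a::comm_ring_1 itself \<Rightarrow> bool" where
  "noetherian_ring _ \<longleftrightarrow>
     (\<forall>J::'a set. ideal_of J \<longrightarrow> (\<exists>F. finite F \<and> J = module.span (*) F))"

definition local_ring_max :: "'a::comm_ring_1 set \<Rightarrow> bool" where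
  "local_ring_max mm \<longleftrightarrow> maximal_ideal mm \<and> (\<forall>J. maximal_ideal J \<longrightarrow> J = mm)"

definition fin_gen_module :: "('a::comm_ring_1 \<Rightarrow> 'm::ab_group_add \<Rightarrow> 'm) \<Rightarrow> bool" where
  "fin_gen_module sc \<longleftrightarrow> (\<exists>F. finite F \<and> module.span sc F = UNIV)"

definition dual_maps :: "('a::comm_ring_1 \<Rightarrow> 'm::ab_group_add \<Rightarrow> 'm) \<Rightarrow> ('m \<Rightarrow> 'a) set" where
  "dual_maps sc = {f. module_hom sc (*) f}"

definition I_SM :: "('a::comm_ring_1 \<Rightarrow> 'm::ab_group_add \<Rightarrow> 'm) \<Rightarrow> 'a set \<Rightarrow> 'm set \<Rightarrow> 'm set" where
  "I_SM sc mm S = {y \<in> module.span sc S. \<forall>f \<in> dual_maps sc. f y \<in> mm}"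

definition free_of_rank :: "('a::comm_ring_1 \<Rightarrow> 'm::ab_group_add \<Rightarrow> 'm) \<Rightarrow> 'm set \<Rightarrow> nat \<Rightarrow> bool" where
  "free_of_rank sc G n \<longleftrightarrow> (\<exists>B. finite B \<and> card B = n \<and> \<not> module.dependent sc B \<and>
      module.span sc B = G)"

definition direct_summand :: "('a::comm_ring_1 \<Rightarrow> 'm::ab_group_add \<Rightarrow> 'm) \<Rightarrow> 'm set \<Rightarrow> bool" where
  "direct_summand sc G \<longleftrightarrow> module.subspace sc G \<and>
     (\<exists>N. module.subspace sc N \<and> G \<inter> N = {0} \<and> {g + x | g x. g \<in> G \<and> x \<in> N} = UNIV)"

definition delta_m :: "('a::comm_ring_1 \<Rightarrow> 'm::ab_group_add \<Rightarrow> 'm) \<Rightarrow> 'm set \<Rightarrow> nat" where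
  "delta_m sc S = (GREATEST n. \<exists>G. G \<subseteq> module.span sc S \<and> free_of_rank sc G n \<and> direct_summand sc G)"

text \<open>Length of the quotient module N/I (for submodules I \<subseteq> N): supremum of the lengths n
  of strictly increasing chains of submodules of N/I, i.e. of submodules
  I = N_0 \<subset> N_1 \<subset> ... \<subset> N_n = N (correspondence theorem).\<close>
definition quot_length :: "('a::comm_ring_1 \<Rightarrow> 'm::ab_group_add \<Rightarrow> 'm) \<Rightarrow> 'm set \<Rightarrow> 'm set \<Rightarrow> enat" where
  "quot_length sc N I = Sup {enat n | n. \<exists>C :: nat \<Rightarrow> 'm set.
      C 0 = I \<and> C n = N \<and> (\<forall>i\<le>n. module.subspace sc (C i)) \<and> (\<forall>i<n. C i \<subset> C (Suc i))}"

end

theory Submission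
  imports Defs
begin


lemma module_ring: "module ((*)::'a::comm_ring_1\<Rightarrow>'a\<Rightarrow>'a)"
  by unfold_locales (auto simp: algebra_simps)

lemma ideal_ofI: "0 \<in> J \<Longrightarrow> (\<And>x y. x \<in> J \<Longrightarrow> y \<in> J \<Longrightarrow> x + y \<in> J) \<Longrightarrow> (\<And>c x. x \<in> J \<Longrightarrow> c * x \<in> J) \<Longrightarrow> ideal_of (J::'a::comm_ring_1 set)"
  unfolding ideal_of_def by (rule module.subspaceI[OF module_ring])

lemma ideal_ofD: assumes "ideal_of (J::'a::comm_ring_1 set)"
  shows "0 \<in> J" "\<And>x y. x \<in> J \<Longrightarrow> y \<in> J \<Longrightarrow> x + y \<in> J" "\<And>c x. x \<in> J \<Longrightarrow> c * x \<in> J"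
  using assms unfolding ideal_of_def
  by (auto intro: module.subspace_0[OF module_ring] module.subspace_add[OF module_ring] module.subspace_scale[OF module_ring, where c=c for c, simplified])

lemma ideal_one: "ideal_of (J::'a::comm_ring_1 set) \<Longrightarrow> 1 \<in> J \<Longrightarrow> J = UNIV"
proof -
  assume J: "ideal_of J" "1 \<in> J"
  have "x \<in> J" for x using ideal_ofD(3)[OF J(1) J(2), of x] by simp
  then show ?thesis by auto
qed

lemma local_mm: assumes "local_ring_max (mm::'a::comm_ring_1 set)"
  shows "ideal_of mm" "1 \<notin> mm"
  using assms ideal_one unfolding local_ring_max_def maximal_ideal_def by auto

lemma local_unit: assumes loc: "local_ring_max (mm::'a::comm_ring_1 set)" and a: "a \<notin> mm"
  shows "\<exists>u. u * a = 1"
proof (rule ccontr)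
  assume nu: "\<not> (\<exists>u. u * a = 1)"
  define A where "A = {J. ideal_of J \<and> a \<in> J \<and> 1 \<notin> J}"
  have "\<exists>M\<in>A. \<forall>X\<in>A. M \<subseteq> X \<longrightarrow> X = M"
  proof (rule Zorn_Lemma2, rule ballI)
    fix C assume C: "C \<in> chains A"
    show "\<exists>U\<in>A. \<forall>X\<in>C. X \<subseteq> U"
    proof (cases "C = {}")
      case True
      have "ideal_of (range (\<lambda>r. r * a))"
      proof (rule ideal_ofI)
        show "0 \<in> range (\<lambda>r. r * a)" by (rule range_eqI[where x="0"]) simp
        show "x + y \<in> range (\<lambda>r. r * a)" if "x \<in> range (\<lambda>r. r * a)" "y \<in> range (\<lambda>r. r * a)" for x y
          using that by (auto simp: distrib_right[symmetric])
        show "c * x \<in> range (\<lambda>r. r * a)" if "x \<in> range (\<lambda>r. r * a)" for c x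
          using that by (auto simp: mult.assoc[symmetric])
      qed
      moreover have "a \<in> range (\<lambda>r. r * a)" by (rule range_eqI[where x="1"]) simp
      moreover have "1 \<notin> range (\<lambda>r. r * a)" using nu by auto
      ultimately have "range (\<lambda>r. r * a) \<in> A" unfolding A_def by auto
      then show ?thesis using True by auto
    next
      case False
      have CA: "C \<subseteq> A" and ch: "\<And>X Y. X \<in> C \<Longrightarrow> Y \<in> C \<Longrightarrow> X \<subseteq> Y \<or> Y \<subseteq> X"
        using C unfolding chains_def chain_subset_def by auto
      have "\<Union>C \<in> A"
        unfolding A_def
      proof (intro CollectI conjI ideal_ofI)
        show "0 \<in> \<Union>C" using False CA unfolding A_def by (auto dest: ideal_ofD)
        show "a \<in> \<Union>C" using False CA unfolding A_def by auto
        show "1 \<notin> \<Union>C" using CA unfolding A_def by auto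
        show "c * x \<in> \<Union>C" if "x \<in> \<Union>C" for c x
          using that CA unfolding A_def by (auto dest: ideal_ofD)
        show "x + y \<in> \<Union>C" if xy: "x \<in> \<Union>C" "y \<in> \<Union>C" for x y
        proof -
          obtain X Y where "X \<in> C" "Y \<in> C" "x \<in> X" "y \<in> Y" using xy by blast
          then have XA: "ideal_of X" "ideal_of Y" using CA unfolding A_def by auto
          show ?thesis
          proof (cases "X \<subseteq> Y")
            case True then show ?thesis using ideal_ofD(2)[OF XA(2), of x y] \<open>Y \<in> C\<close> \<open>x \<in> X\<close> \<open>y \<in> Y\<close> by blast
          next
            case False then have "Y \<subseteq> X" using ch[OF \<open>X \<in> C\<close> \<open>Y \<in> C\<close>] by auto
            then show ?thesis using ideal_ofD(2)[OF XA(1), of x y] \<open>X \<in> C\<close> \<open>x \<in> X\<close> \<open>y \<in> Y\<close> by blast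
          qed
        qed
      qed
      then show ?thesis by auto
    qed
  qed
  then obtain M where M: "M \<in> A" "\<And>X. X \<in> A \<Longrightarrow> M \<subseteq> X \<Longrightarrow> X = M" by blast
  have "maximal_ideal M"
    unfolding maximal_ideal_def
  proof (intro conjI allI impI)
    show "ideal_of M" "M \<noteq> UNIV" using M(1) unfolding A_def by auto
    fix K assume K: "ideal_of K" "M \<subseteq> K"
    show "K = M \<or> K = UNIV"
    proof (cases "1 \<in> K")
      case True then show ?thesis using ideal_one K by auto
    next
      case False then have "K \<in> A" using K M(1) unfolding A_def by auto
      then show ?thesis using M(2) K by auto
    qed
  qed
  then have "M = mm" using loc unfolding local_ring_max_def by auto
  then show False using M(1) a unfolding A_def by auto
qed




definition mindep :: "('a::comm_ring_1 \<Rightarrow> 'b::ab_group_add \<Rightarrow> 'b) \<Rightarrow> 'a set \<Rightarrow> 'b set \<Rightarrow> 'k set \<Rightarrow> ('k \<Rightarrow> 'b) \<Rightarrow> bool" where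
  "mindep sc mm I K x \<longleftrightarrow> (\<forall>r. (\<Sum>i\<in>K. sc (r i) (x i)) \<in> I \<longrightarrow> (\<forall>i\<in>K. r i \<in> mm))"

context module begin

lemma sum_delta_scale: "finite K \<Longrightarrow> j \<in> K \<Longrightarrow> (\<Sum>i\<in>K. (if i = j then 1 else 0) *s x i) = x j"
proof -
  assume "finite K" "j \<in> K"
  have "(\<Sum>i\<in>K. (if i = j then 1 else 0) *s x i) = (\<Sum>i\<in>K. if i = j then x i else 0)"
    by (rule sum.cong) auto
  also have "\<dots> = x j" using \<open>finite K\<close> \<open>j \<in> K\<close> by (simp add: sum.delta)
  finally show ?thesis .
qed

lemma exchange:
  fixes mm :: "'a set" and I :: "'b set"
  assumes mmI: "ideal_of mm" and one: "1 \<notin> mm"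
    and units: "\<And>a. a \<notin> mm \<Longrightarrow> \<exists>u. u * a = 1"
    and I: "subspace I"
    and T: "finite T"
    and Tm: "\<And>t r. t \<in> T \<Longrightarrow> r \<in> mm \<Longrightarrow> r *s t \<in> I"
    and rep: "\<And>i. i \<in> K \<Longrightarrow> \<exists>a. x i - (\<Sum>t\<in>T. a t *s t) \<in> I"
    and ind: "mindep scale mm I K x"
  shows "card K \<le> card T"
  using T Tm rep ind
proof (induction T arbitrary: K x rule: finite_induct)
  case empty
  show ?case
  proof (cases "finite K \<and> K \<noteq> {}")
    case False then show ?thesis by auto
  next
    case True
    then obtain j where j: "j \<in> K" by auto
    have "x j \<in> I" using empty.prems(2)[OF j] by simp
    then have "(\<Sum>i\<in>K. (if i = j then 1 else 0) *s x i) \<in> I"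
      using sum_delta_scale[of K j x] True j by simp
    then have "(\<lambda>i. if i = j then 1 else 0) j \<in> mm"
      using empty.prems(3)[unfolded mindep_def, rule_format, of "\<lambda>i. if i = j then 1 else 0"] j by blast
    then show ?thesis using one by simp
  qed
next
  case (insert t T)
  from insert.prems(2) obtain a where a: "\<And>i. i \<in> K \<Longrightarrow> x i - (\<Sum>s\<in>insert t T. a i s *s s) \<in> I"
    by metis
  have sumins: "(\<Sum>s\<in>insert t T. a i s *s s) = a i t *s t + (\<Sum>s\<in>T. a i s *s s)" for i
    using insert.hyps by simp
  show ?case
  proof (cases "\<forall>i\<in>K. a i t \<in> mm")
    case True
    have "card K \<le> card T"
    proof (rule insert.IH)
      show "\<And>t' r. t' \<in> T \<Longrightarrow> r \<in> mm \<Longrightarrow> r *s t' \<in> I" using insert.prems(1) by auto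
      show "mindep scale mm I K x" by fact
      fix i assume i: "i \<in> K"
      have "x i - (\<Sum>s\<in>T. a i s *s s) = (x i - (\<Sum>s\<in>insert t T. a i s *s s)) + a i t *s t"
        unfolding sumins by simp
      also have "\<dots> \<in> I" using subspace_add[OF I a[OF i] insert.prems(1)[of t "a i t"]] True i by auto
      finally show "\<exists>a. x i - (\<Sum>t\<in>T. a t *s t) \<in> I" by blast
    qed
    then show ?thesis using insert.hyps by simp
  next
    case False
    then obtain j where j: "j \<in> K" "a j t \<notin> mm" by auto
    obtain u where u: "u * a j t = 1" using units[OF j(2)] by auto
    show ?thesis
    proof (cases "finite K")
      case False then show ?thesis by simp
    next
      case finK: True
      define K' where "K' = K - {j}"
      define c where "c i = a i t * u" for i
      define y where "y i = x i - c i *s x j" for i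
      have "card K' \<le> card T"
      proof (rule insert.IH)
        show "\<And>t' r. t' \<in> T \<Longrightarrow> r \<in> mm \<Longrightarrow> r *s t' \<in> I" using insert.prems(1) by auto
        fix i assume i: "i \<in> K'"
        define b where "b s = a i s - c i * a j s" for s
        have cjt: "c i * a j t = a i t" unfolding c_def using u by (metis mult.assoc mult.right_neutral)
        have "y i - (\<Sum>s\<in>T. b s *s s) =
            (x i - (\<Sum>s\<in>insert t T. a i s *s s)) - c i *s (x j - (\<Sum>s\<in>insert t T. a j s *s s))"
        proof -
          have "(\<Sum>s\<in>T. b s *s s) = (\<Sum>s\<in>T. a i s *s s) - c i *s (\<Sum>s\<in>T. a j s *s s)"
            unfolding b_def by (simp add: scale_left_diff_distrib sum_subtractf scale_sum_right)
          moreover have "c i *s (a j t *s t) = a i t *s t" using cjt by simp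
          ultimately show ?thesis unfolding y_def sumins
            by (simp add: scale_right_diff_distrib scale_right_distrib algebra_simps)
        qed
        also have "\<dots> \<in> I"
          using subspace_diff[OF I a[of i] subspace_scale[OF I a[OF j(1)]]] i unfolding K'_def by auto
        finally show "\<exists>a. y i - (\<Sum>t\<in>T. a t *s t) \<in> I" by blast
      next
        show "mindep scale mm I K' y"
          unfolding mindep_def
        proof (intro allI impI)
          fix r assume r: "(\<Sum>i\<in>K'. r i *s y i) \<in> I"
          define r' where "r' = r(j := - (\<Sum>i\<in>K'. r i * c i))"
          have "(\<Sum>i\<in>K. r' i *s x i) = r' j *s x j + (\<Sum>i\<in>K'. r' i *s x i)"
            unfolding K'_def using finK j(1) by (simp add: sum.remove)
          also have "(\<Sum>i\<in>K'. r' i *s x i) = (\<Sum>i\<in>K'. r i *s x i)"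
            unfolding r'_def K'_def by (rule sum.cong) auto
          also have "(\<Sum>i\<in>K'. r i *s y i) = (\<Sum>i\<in>K'. r i *s x i) - (\<Sum>i\<in>K'. r i * c i) *s x j"
            unfolding y_def by (simp add: scale_right_diff_distrib sum_subtractf scale_sum_left)
          ultimately have "(\<Sum>i\<in>K. r' i *s x i) = (\<Sum>i\<in>K'. r i *s y i)"
            unfolding r'_def by simp
          then have "(\<Sum>i\<in>K. r' i *s x i) \<in> I" using r by simp
          then have "\<forall>i\<in>K. r' i \<in> mm" using insert.prems(3) unfolding mindep_def by blast
          then show "\<forall>i\<in>K'. r i \<in> mm" unfolding r'_def K'_def
            by (metis (no_types, lifting) DiffE fun_upd_other insertI1)
        qed
      qed
      moreover have "card K = Suc (card K')" unfolding K'_def using finK j(1)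
        by (metis card_Suc_Diff1)
      ultimately show ?thesis using insert.hyps by simp
    qed
  qed
qed

end



context module begin

lemma chain_mono:
  assumes "\<And>i. i < n \<Longrightarrow> C i \<subset> C (Suc i)"
  shows "i \<le> k \<Longrightarrow> k \<le> n \<Longrightarrow> C i \<subseteq> C k"
proof (induction k)
  case 0 then show ?case by simp
next
  case (Suc k)
  show ?case
  proof (cases "i = Suc k")
    case True then show ?thesis by simp
  next
    case False
    then have "C i \<subseteq> C k" using Suc by simp
    also have "C k \<subseteq> C (Suc k)" using assms[of k] Suc.prems by auto
    finally show ?thesis .
  qed
qed

lemma chain_family:
  fixes mm :: "'a set"
  assumes units: "\<And>a. a \<notin> mm \<Longrightarrow> \<exists>u. u * a = 1"
    and sub: "\<And>i. i \<le> n \<Longrightarrow> subspace (C i)"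
    and C0: "C 0 = I"
    and strict: "\<And>i. i < n \<Longrightarrow> C i \<subset> C (Suc i)"
    and kill: "\<And>r y. r \<in> mm \<Longrightarrow> y \<in> C n \<Longrightarrow> r *s y \<in> I"
  shows "\<exists>x. (\<forall>i<n. x i \<in> C n) \<and> mindep scale mm I {..<n} x"
proof -
  have "\<forall>i. \<exists>z. i < n \<longrightarrow> z \<in> C (Suc i) \<and> z \<notin> C i"
    using strict by blast
  then obtain x where x: "\<And>i. i < n \<Longrightarrow> x i \<in> C (Suc i) \<and> x i \<notin> C i" by metis
  have mono: "\<And>i k. i \<le> k \<Longrightarrow> k \<le> n \<Longrightarrow> C i \<subseteq> C k" using chain_mono[of n C, OF strict] by blast
  have xn: "x i \<in> C n" if "i < n" for i using x[OF that] mono[of "Suc i" n] that by auto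
  have IS: "subspace I" using sub[of 0] C0 by simp
  have main: "j \<le> n \<Longrightarrow> (\<Sum>i<j. r i *s x i) \<in> I \<Longrightarrow> (\<forall>i<j. r i \<in> mm)" for j r
  proof (induction j)
    case 0 then show ?case by simp
  next
    case (Suc j)
    have tot: "(\<Sum>i<j. r i *s x i) + r j *s x j \<in> I" using Suc.prems by simp
    have sC: "(\<Sum>i<j. r i *s x i) \<in> C j"
    proof (rule subspace_sum[OF sub])
      show "j \<le> n" using Suc.prems by simp
      fix i assume "i \<in> {..<j}"
      then have "x i \<in> C j" using x[of i] mono[of "Suc i" j] Suc.prems by auto
      then show "r i *s x i \<in> C j" using subspace_scale[OF sub] Suc.prems by auto
    qed
    have rj: "r j \<in> mm"
    proof (rule ccontr)
      assume nr: "r j \<notin> mm"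
      obtain u where u: "u * r j = 1" using units[OF nr] by auto
      have "r j *s x j = ((\<Sum>i<j. r i *s x i) + r j *s x j) - (\<Sum>i<j. r i *s x i)" by simp
      also have "\<dots> \<in> C j"
      proof -
        have "(\<Sum>i<j. r i *s x i) + r j *s x j \<in> C j" using tot mono[of 0 j] C0 Suc.prems by auto
        moreover have jn: "j \<le> n" using Suc.prems by simp
        ultimately show ?thesis using sC by (intro subspace_diff[OF sub[OF jn]])
      qed
      finally have "u *s (r j *s x j) \<in> C j" using subspace_scale[OF sub, of j "r j *s x j" u] Suc.prems by (simp del: scale_scale)
      then have "x j \<in> C j" using u by simp
      then show False using x[of j] Suc.prems by auto
    qed
    have "(\<Sum>i<j. r i *s x i) = ((\<Sum>i<j. r i *s x i) + r j *s x j) - r j *s x j" by simp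
    also have "\<dots> \<in> I" by (rule subspace_diff[OF IS tot kill[OF rj xn]]) (use Suc.prems in simp)
    finally have "\<forall>i<j. r i \<in> mm" using Suc by auto
    then show ?case using rj less_Suc_eq by auto
  qed
  show ?thesis
    using main[of n] xn unfolding mindep_def lessThan_iff by (intro exI[of _ x]) auto
qed

end



context module begin

lemma family_chain:
  fixes mm :: "'a set"
  assumes one: "1 \<notin> mm" and n: "0 < n"
    and I: "subspace I" and L: "subspace L" and IL: "I \<subseteq> L"
    and xL: "\<And>i. i < n \<Longrightarrow> x i \<in> L"
    and ind: "mindep scale mm I {..<n} x"
  shows "\<exists>C. C 0 = I \<and> C n = L \<and> (\<forall>i\<le>n. subspace (C i)) \<and> (\<forall>i<n. C i \<subset> C (Suc i))"
proof -
  define D where "D j = {y. \<exists>c. y - (\<Sum>i<j. c i *s x i) \<in> I}" for j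
  define C where "C j = (if j < n then D j else L)" for j
  have subD: "subspace (D j)" for j
    unfolding D_def
  proof (rule subspaceI; clarsimp)
    show "\<exists>c. - (\<Sum>i<j. c i *s x i) \<in> I"
      by (rule exI[of _ "\<lambda>i. 0"]) (simp add: subspace_0[OF I])
    fix y z c d assume "y - (\<Sum>i<j. c i *s x i) \<in> I" "z - (\<Sum>i<j. d i *s x i) \<in> I"
    then have "(y - (\<Sum>i<j. c i *s x i)) + (z - (\<Sum>i<j. d i *s x i)) \<in> I" by (rule subspace_add[OF I])
    moreover have "(y - (\<Sum>i<j. c i *s x i)) + (z - (\<Sum>i<j. d i *s x i)) = y + z - (\<Sum>i<j. (c i + d i) *s x i)"
      by (simp add: scale_left_distrib sum.distrib algebra_simps)
    ultimately show "\<exists>e. y + z - (\<Sum>i<j. e i *s x i) \<in> I" by metis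
  next
    fix y r c assume "y - (\<Sum>i<j. c i *s x i) \<in> I"
    then have "r *s (y - (\<Sum>i<j. c i *s x i)) \<in> I" by (rule subspace_scale[OF I])
    moreover have "r *s (y - (\<Sum>i<j. c i *s x i)) = r *s y - (\<Sum>i<j. (r * c i) *s x i)"
      by (simp add: scale_right_diff_distrib scale_sum_right)
    ultimately show "\<exists>e. r *s y - (\<Sum>i<j. e i *s x i) \<in> I" by metis
  qed
  have D0: "D 0 = I" unfolding D_def by simp
  have DL: "D j \<subseteq> L" if "j \<le> n" for j
  proof
    fix y assume "y \<in> D j"
    then obtain c where c: "y - (\<Sum>i<j. c i *s x i) \<in> I" unfolding D_def by auto
    have "(\<Sum>i<j. c i *s x i) \<in> L" using that xL by (intro subspace_sum[OF L] subspace_scale[OF L]) auto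
    then have "(y - (\<Sum>i<j. c i *s x i)) + (\<Sum>i<j. c i *s x i) \<in> L" using c IL by (intro subspace_add[OF L]) auto
    then show "y \<in> L" by simp
  qed
  have Dmono: "D j \<subseteq> D (Suc j)" for j
  proof
    fix y assume "y \<in> D j"
    then obtain c where c: "y - (\<Sum>i<j. c i *s x i) \<in> I" unfolding D_def by auto
    have "(\<Sum>i<Suc j. (c(j := 0)) i *s x i) = (\<Sum>i<j. c i *s x i)"
      by (simp add: sum.lessThan_Suc)
    then have "y - (\<Sum>i<Suc j. (c(j := 0)) i *s x i) \<in> I" using c by simp
    then show "y \<in> D (Suc j)" unfolding D_def by blast
  qed
  have xD: "x j \<in> D (Suc j)" for j
  proof -
    have "(\<Sum>i<Suc j. (if i = j then 1 else 0) *s x i) = x j"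
      by (rule sum_delta_scale) auto
    then have "x j - (\<Sum>i<Suc j. (if i = j then 1 else 0) *s x i) \<in> I" using subspace_0[OF I] by simp
    then show ?thesis unfolding D_def by (intro CollectI exI[of _ "\<lambda>i. if i = j then 1 else 0"])
  qed
  have xnD: "x j \<notin> D j" if j: "j < n" for j
  proof
    assume "x j \<in> D j"
    then obtain c where c: "x j - (\<Sum>i<j. c i *s x i) \<in> I" unfolding D_def by auto
    define r where "r i = (if i < j then - c i else if i = j then 1 else 0)" for i
    have "(\<Sum>i<n. r i *s x i) = (\<Sum>i<Suc j. r i *s x i)"
      by (rule sum.mono_neutral_right) (use j in \<open>auto simp: r_def\<close>)
    also have "\<dots> = (\<Sum>i<j. r i *s x i) + x j" by (simp add: r_def)
    also have "(\<Sum>i<j. r i *s x i) = - (\<Sum>i<j. c i *s x i)"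
      by (simp add: r_def sum_negf[symmetric])
    finally have "(\<Sum>i<n. r i *s x i) = x j - (\<Sum>i<j. c i *s x i)" by simp
    then have "(\<Sum>i<n. r i *s x i) \<in> I" using c by simp
    then have "r j \<in> mm" using ind j unfolding mindep_def by auto
    then show False using one by (simp add: r_def)
  qed
  show ?thesis
  proof (intro exI[of _ C] conjI allI impI)
    show "C 0 = I" using n D0 by (simp add: C_def)
    show "C n = L" by (simp add: C_def)
    show "subspace (C i)" for i using subD L by (simp add: C_def)
    fix i assume i: "i < n"
    show "C i \<subset> C (Suc i)"
    proof (cases "Suc i < n")
      case True
      then show ?thesis using Dmono[of i] xD[of i] xnD[OF i] i by (auto simp: C_def)
    next
      case False
      then show ?thesis using DL[of i] xL[OF i] xnD[OF i] i by (auto simp: C_def)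
    qed
  qed
qed

end



context module begin

lemma functional_exists:
  assumes W: "subspace W" and nb: "\<And>c. c *s b \<in> W \<Longrightarrow> c = 0" and ex: "\<And>y. \<exists>c. y - c *s b \<in> W"
  shows "\<exists>f. module_hom scale (*) f \<and> (\<forall>y c. y - c *s b \<in> W \<longrightarrow> f y = c)"
proof -
  have uniq: "c = c'" if "y - c *s b \<in> W" "y - c' *s b \<in> W" for y c c'
  proof -
    have "(y - c *s b) - (y - c' *s b) \<in> W" using subspace_diff[OF W that] .
    moreover have "(y - c *s b) - (y - c' *s b) = (c' - c) *s b" by (simp add: scale_left_diff_distrib)
    ultimately have "c' - c = 0" using nb by metis
    then show ?thesis by simp
  qed
  define f where "f y = (THE c. y - c *s b \<in> W)" for y
  have fc: "f y = c" if "y - c *s b \<in> W" for y c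
    unfolding f_def using that uniq by (intro the_equality) auto
  have "module_hom scale (*) f"
    unfolding module_hom_iff
  proof (intro conjI allI)
    show "module scale" by (rule module_axioms)
    show "module ((*)::'a\<Rightarrow>'a\<Rightarrow>'a)" by (rule module_ring)
    fix y z :: 'b
    obtain c d where c: "y - c *s b \<in> W" and d: "z - d *s b \<in> W" using ex by metis
    have "(y - c *s b) + (z - d *s b) \<in> W" using subspace_add[OF W c d] .
    moreover have "(y - c *s b) + (z - d *s b) = (y + z) - (c + d) *s b" by (simp add: scale_left_distrib)
    ultimately show "f (y + z) = f y + f z" using fc c d by metis
  next
    fix r and y :: 'b
    obtain c where c: "y - c *s b \<in> W" using ex by metis
    have "r *s (y - c *s b) \<in> W" using subspace_scale[OF W c] .
    moreover have "r *s (y - c *s b) = r *s y - (r * c) *s b" by (simp add: scale_right_diff_distrib)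
    ultimately show "f (r *s y) = r * f y" using fc c by metis
  qed
  then show ?thesis using fc by blast
qed

lemma summand_dual:
  assumes N: "subspace N" and GN: "span B \<inter> N = {0}"
    and sum: "{g + x | g x. g \<in> span B \<and> x \<in> N} = UNIV"
    and B: "finite B" "independent B" and b: "b \<in> B"
  shows "\<exists>f. module_hom scale (*) f \<and> (\<forall>r. f (\<Sum>v\<in>B. r v *s v) = r b)"
proof -
  define W where "W = span (N \<union> (B - {b}))"
  have W: "subspace W" unfolding W_def by simp
  have nb: "c = 0" if c: "c *s b \<in> W" for c
  proof -
    obtain n w where nw: "c *s b = n + w" "n \<in> span N" "w \<in> span (B - {b})"
      using c unfolding W_def span_Un by auto
    have nN: "n \<in> N" using nw(2) span_minimal[of N N] N by auto
    obtain d where d: "w = (\<Sum>v\<in>B - {b}. d v *s v)" using nw(3) span_finite[of "B - {b}"] B(1) by auto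
    have "n = c *s b - w" using nw(1) by (simp add: algebra_simps)
    moreover have "c *s b - w \<in> span B"
    proof (rule span_diff)
      show "c *s b \<in> span B" by (rule span_scale[OF span_base[OF b]])
      show "w \<in> span B" using nw(3) span_mono[of "B - {b}" B] by blast
    qed
    ultimately have "n \<in> span B \<inter> N" using nN by simp
    then have "n = 0" using GN by blast
    then have z: "c *s b - (\<Sum>v\<in>B - {b}. d v *s v) = 0" using nw(1) d by simp
    define u where "u v = (if v = b then c else - d v)" for v
    have "(\<Sum>v\<in>B. u v *s v) = u b *s b + (\<Sum>v\<in>B - {b}. u v *s v)"
      using B(1) b by (simp add: sum.remove)
    also have "(\<Sum>v\<in>B - {b}. u v *s v) = - (\<Sum>v\<in>B - {b}. d v *s v)"
      unfolding u_def by (simp add: sum_negf[symmetric])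
    finally have "(\<Sum>v\<in>B. u v *s v) = 0" using z by (simp add: u_def)
    then have "u b = 0" using independentD[OF B(2) B(1) order_refl _ b] by blast
    then show ?thesis by (simp add: u_def)
  qed
  have ex: "\<exists>c. y - c *s b \<in> W" for y
  proof -
    have "y \<in> {g + x | g x. g \<in> span B \<and> x \<in> N}" using sum by simp
    then obtain g n where gn: "y = g + n" "g \<in> span B" "n \<in> N" by blast
    have "insert b (B - {b}) = B" using b by auto
    then obtain k where k: "g - k *s b \<in> span (B - {b})" using gn(2) span_breakdown_eq[of g b "B - {b}"] by auto
    have "n + (g - k *s b) \<in> W" unfolding W_def
    proof (rule span_add)
      show "n \<in> span (N \<union> (B - {b}))" using gn(3) by (intro span_base) blast
      show "g - k *s b \<in> span (N \<union> (B - {b}))" using k span_mono[of "B - {b}" "N \<union> (B - {b})"] by blast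
    qed
    then show ?thesis using gn(1) by (intro exI[of _ k]) (simp add: algebra_simps)
  qed
  obtain f where f: "module_hom scale (*) f" "\<And>y c. y - c *s b \<in> W \<Longrightarrow> f y = c"
    using functional_exists[OF W nb ex] by blast
  have "f (\<Sum>v\<in>B. r v *s v) = r b" for r
  proof (rule f(2))
    have "(\<Sum>v\<in>B. r v *s v) - r b *s b = (\<Sum>v\<in>B - {b}. r v *s v)"
      using B(1) b by (simp add: sum.remove)
    also have "\<dots> \<in> W" unfolding W_def
      by (rule span_sum, rule span_scale, rule span_base) blast
    finally show "(\<Sum>v\<in>B. r v *s v) - r b *s b \<in> W" .
  qed
  then show ?thesis using f(1) by blast
qed

lemma summand_mindep:
  assumes N: "subspace N" and GN: "span B \<inter> N = {0}"
    and sum: "{g + x | g x. g \<in> span B \<and> x \<in> N} = UNIV"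
    and B: "finite B" "independent B"
    and I: "I \<subseteq> {y. \<forall>f\<in>dual_maps scale. f y \<in> mm}"
  shows "mindep scale mm I B (\<lambda>v. v)"
  unfolding mindep_def
proof (intro allI impI ballI)
  fix r b assume r: "(\<Sum>v\<in>B. r v *s v) \<in> I" and b: "b \<in> B"
  obtain f where f: "module_hom scale (*) f" "\<And>r. f (\<Sum>v\<in>B. r v *s v) = r b"
    using summand_dual[OF N GN sum B b] by blast
  have "f \<in> dual_maps scale" using f(1) by (simp add: dual_maps_def)
  then have "f (\<Sum>v\<in>B. r v *s v) \<in> mm" using r I by auto
  then show "r b \<in> mm" using f(2) by simp
qed

end



context module begin

lemma dual_hom: "f \<in> dual_maps scale \<Longrightarrow> f (x + y) = f x + f y" "f \<in> dual_maps scale \<Longrightarrow> f (c *s x) = c * f x"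
  "f \<in> dual_maps scale \<Longrightarrow> f 0 = 0"
  unfolding dual_maps_def using module_hom.zero[of scale "(*)" f] by (auto simp: module_hom_iff)

lemma ISM_facts:
  assumes mmI: "ideal_of mm"
  shows "I_SM scale mm S \<subseteq> span S" "I_SM scale mm S \<subseteq> {y. \<forall>f\<in>dual_maps scale. f y \<in> mm}"
    "subspace (I_SM scale mm S)"
    "\<And>r y. r \<in> mm \<Longrightarrow> y \<in> span S \<Longrightarrow> r *s y \<in> I_SM scale mm S"
proof -
  show "I_SM scale mm S \<subseteq> span S" "I_SM scale mm S \<subseteq> {y. \<forall>f\<in>dual_maps scale. f y \<in> mm}"
    unfolding I_SM_def by auto
  show "subspace (I_SM scale mm S)"
    unfolding I_SM_def
    by (rule subspaceI) (auto simp: dual_hom ideal_ofD[OF mmI] span_zero span_add span_scale)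
  show "r *s y \<in> I_SM scale mm S" if "r \<in> mm" "y \<in> span S" for r y
    unfolding I_SM_def using that
    by (auto simp: dual_hom span_scale mult.commute[of r] intro: ideal_ofD(3)[OF mmI])
qed

lemma extend_summand:
  fixes mm :: "'a set"
  assumes mmI: "ideal_of mm"
    and units: "\<And>a. a \<notin> mm \<Longrightarrow> \<exists>u. u * a = 1"
    and B: "finite B" "independent B"
    and N: "subspace N" and GN: "span B \<inter> N = {0}"
    and sum: "{g + x | g x. g \<in> span B \<and> x \<in> N} = UNIV"
    and BS: "span B \<subseteq> span S"
    and y: "y \<in> span S" and ny: "\<not> (\<exists>a. y - (\<Sum>t\<in>B. a t *s t) \<in> I_SM scale mm S)"
  shows "\<exists>G. G \<subseteq> span S \<and> free_of_rank scale G (Suc (card B)) \<and> direct_summand scale G"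
proof -
  have "y \<in> {g + x | g x. g \<in> span B \<and> x \<in> N}" using sum by simp
  then obtain g z where gz: "y = g + z" "g \<in> span B" "z \<in> N" by blast
  have zS: "z \<in> span S" using gz BS y by (metis add_diff_cancel_left' span_diff subsetD)
  have zI: "z \<notin> I_SM scale mm S"
  proof
    assume "z \<in> I_SM scale mm S"
    obtain a where "g = (\<Sum>t\<in>B. a t *s t)" using gz(2) span_finite[OF B(1)] by auto
    then have "y - (\<Sum>t\<in>B. a t *s t) = z" using gz(1) by simp
    then show False using ny \<open>z \<in> I_SM scale mm S\<close> by metis
  qed
  then obtain f where f: "f \<in> dual_maps scale" "f z \<notin> mm" using zS unfolding I_SM_def by auto
  obtain u where u: "u * f z = 1" using units[OF f(2)] by auto
  have z0: "z \<noteq> 0" using f dual_hom(3)[OF f(1)] ideal_ofD(1)[OF mmI] by auto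
  have zB: "z \<notin> B"
  proof
    assume "z \<in> B"
    then have "z \<in> span B \<inter> N" using gz(3) span_base by auto
    then show False using GN z0 by auto
  qed
  define B' where "B' = insert z B"
  define N' where "N' = N \<inter> {w. f w = 0}"
  have cB': "card B' = Suc (card B)" unfolding B'_def using B(1) zB by simp
  have kill_z: "c = 0" if "c *s z \<in> span B" for c
  proof -
    have "c *s z \<in> N" using subspace_scale[OF N gz(3)] .
    then have "c *s z = 0" using that GN by auto
    then have "c * f z = 0" using dual_hom(2)[OF f(1), of c z] dual_hom(3)[OF f(1)] by simp
    then have "c * f z * u = 0" by simp
    then have "c * (u * f z) = 0" by (metis mult.assoc mult.commute)
    then show "c = 0" using u by simp
  qed
  have indB': "independent B'"
  proof
    assume "dependent B'"
    then obtain w where w: "\<exists>v\<in>B'. w v \<noteq> 0" "(\<Sum>v\<in>B'. w v *s v) = 0"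
      using dependent_finite[of B'] B(1) unfolding B'_def by auto
    have "(\<Sum>v\<in>B'. w v *s v) = w z *s z + (\<Sum>v\<in>B. w v *s v)"
      unfolding B'_def using B(1) zB by simp
    then have e: "w z *s z = - (\<Sum>v\<in>B. w v *s v)" using w(2) by (simp add: eq_neg_iff_add_eq_0)
    have "- (\<Sum>v\<in>B. w v *s v) \<in> span B" by (intro span_neg span_sum span_scale span_base)
    then have wz: "w z = 0" using kill_z e by metis
    then have "(\<Sum>v\<in>B. w v *s v) = 0" using e by simp
    then have "\<forall>v\<in>B. w v = 0" using independentD[OF B(2) B(1) order_refl] by blast
    then show False using w(1) wz unfolding B'_def by auto
  qed
  have N': "subspace N'" unfolding N'_def
  proof (rule subspace_inter[OF N])
    show "subspace {w. f w = 0}"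
      by (rule subspaceI) (auto simp: dual_hom[OF f(1)])
  qed
  have GN': "span B' \<inter> N' = {0}"
  proof (intro equalityI subsetI)
    fix w assume w: "w \<in> span B' \<inter> N'"
    then obtain k where k: "w - k *s z \<in> span B" unfolding B'_def using span_breakdown_eq by blast
    have "w - k *s z \<in> N" using w subspace_diff[OF N _ subspace_scale[OF N gz(3)]] unfolding N'_def by auto
    then have "w - k *s z \<in> span B \<inter> N" using k by simp
    then have "w - k *s z = 0" using GN by blast
    then have wk: "w = k *s z" by simp
    then have "k * f z = 0" using w dual_hom(2)[OF f(1)] unfolding N'_def by auto
    then have "k * f z * u = 0" by simp
    then have "k * (u * f z) = 0" by (metis mult.assoc mult.commute)
    then have "k = 0" using u by simp
    then show "w \<in> {0}" using wk by simp
  next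
    fix w :: 'b assume "w \<in> {0}"
    then show "w \<in> span B' \<inter> N'" using subspace_0[OF N'] span_zero by auto
  qed
  have sum': "{g + x | g x. g \<in> span B' \<and> x \<in> N'} = UNIV"
  proof (intro equalityI subsetI)
    fix m :: 'b
    have "m \<in> {g + x | g x. g \<in> span B \<and> x \<in> N}" using sum by simp
    then obtain h w where hw: "m = h + w" "h \<in> span B" "w \<in> N" by blast
    define c where "c = f w * u"
    have "(h + c *s z) - c *s z \<in> span B" using hw(2) by simp
    then have "h + c *s z \<in> span B'" unfolding B'_def using span_breakdown_eq[of "h + c *s z" z B] by blast
    moreover have "w - c *s z \<in> N'"
    proof -
      have "w - c *s z \<in> N" using subspace_diff[OF N hw(3) subspace_scale[OF N gz(3)]] .
      moreover have "f (w - c *s z) = 0"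
      proof -
        have "f (w - c *s z) = f (w + (- c) *s z)" by simp
        also have "\<dots> = f w + (- c) * f z" by (simp only: dual_hom[OF f(1)])
        also have "\<dots> = f w - c * f z" by simp
        also have "c * f z = f w" unfolding c_def using u by (simp add: mult.assoc)
        finally show ?thesis by simp
      qed
      ultimately show ?thesis unfolding N'_def by simp
    qed
    moreover have "m = (h + c *s z) + (w - c *s z)" using hw(1) by simp
    ultimately show "m \<in> {g + x | g x. g \<in> span B' \<and> x \<in> N'}" by blast
  qed auto
  have sub: "span B' \<subseteq> span S"
  proof (rule span_minimal)
    show "B' \<subseteq> span S" unfolding B'_def using zS BS span_superset[of B] by auto
  qed simp
  show ?thesis
  proof (intro exI[of _ "span B'"] conjI sub)
    show "free_of_rank scale (span B') (Suc (card B))"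
      unfolding free_of_rank_def using cB' indB' B(1) unfolding B'_def by auto
    show "direct_summand scale (span B')"
      unfolding direct_summand_def using N' GN' sum' by auto
  qed
qed

end



context module begin

lemma main_result:
  fixes mm :: "'a set"
  assumes loc: "local_ring_max mm" and fg: "fin_gen_module scale"
  shows "enat (delta_m scale S) = quot_length scale (span S) (I_SM scale mm S)"
proof -
  have mmI: "ideal_of mm" and one: "1 \<notin> mm" using local_mm[OF loc] by auto
  have units: "\<And>a. a \<notin> mm \<Longrightarrow> \<exists>u. u * a = 1" using local_unit[OF loc] by blast
  define I where "I = I_SM scale mm S"
  define L where "L = span S"
  have IL: "I \<subseteq> L" and Idual: "I \<subseteq> {y. \<forall>f\<in>dual_maps scale. f y \<in> mm}" and IS: "subspace I"
    and kill: "\<And>r y. r \<in> mm \<Longrightarrow> y \<in> L \<Longrightarrow> r *s y \<in> I"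
    using ISM_facts[OF mmI, where S=S] unfolding I_def L_def by auto
  have LS: "subspace L" unfolding L_def by simp
  define P where "P n \<longleftrightarrow> (\<exists>G. G \<subseteq> L \<and> free_of_rank scale G n \<and> direct_summand scale G)" for n
  have delta: "delta_m scale S = (GREATEST n. P n)" unfolding delta_m_def P_def L_def by simp
  obtain F where F: "finite F" "span F = UNIV" using fg unfolding fin_gen_module_def by auto
  have Pbound: "n \<le> card F" if "P n" for n
  proof -
    obtain G B N where G: "finite B" "card B = n" "independent B" "span B = G"
      "subspace N" "G \<inter> N = {0}" "{g + x | g x. g \<in> G \<and> x \<in> N} = UNIV"
      using \<open>P n\<close> unfolding P_def free_of_rank_def direct_summand_def by blast
    have md: "mindep scale mm (I_SM scale mm UNIV) B (\<lambda>v. v)"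
    proof (rule summand_mindep[OF G(5) _ _ G(1,3) ISM_facts(2)[OF mmI, where S=UNIV]])
      show "span B \<inter> N = {0}" using G(4,6) by simp
      show "{g + x | g x. g \<in> span B \<and> x \<in> N} = UNIV" using G(4,7) by simp
    qed
    have "card B \<le> card F"
    proof (rule exchange[OF mmI one units ISM_facts(3)[OF mmI, where S=UNIV] F(1) _ _ md])
      show "r *s t \<in> I_SM scale mm UNIV" if "r \<in> mm" for t r
        using ISM_facts(4)[OF mmI, where S=UNIV] that by simp
      fix b
      have "b \<in> span F" using F(2) by simp
      then obtain a where "b = (\<Sum>t\<in>F. a t *s t)" using span_finite[OF F(1)] by auto
      then have "b - (\<Sum>t\<in>F. a t *s t) = 0" by simp
      then show "\<exists>a. b - (\<Sum>t\<in>F. a t *s t) \<in> I_SM scale mm UNIV"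
        using subspace_0[OF ISM_facts(3)[OF mmI, where S=UNIV]] by metis
    qed
    then show ?thesis using G(2) by simp
  qed
  have P0: "P 0"
  proof -
    have f0: "free_of_rank scale {0} 0"
      unfolding free_of_rank_def by (intro exI[of _ "{}"]) (auto simp: dependent_explicit)
    have d0: "direct_summand scale {0}"
      unfolding direct_summand_def by (intro conjI exI[of _ UNIV]) auto
    show ?thesis unfolding P_def using f0 d0 subspace_0[OF LS] by blast
  qed
  have Pd: "P (delta_m scale S)" unfolding delta using P0 Pbound by (rule GreatestI_nat)
  have led: "n \<le> delta_m scale S" if "P n" for n unfolding delta using that Pbound by (rule Greatest_le_nat)
  define Q where "Q = {enat n | n. \<exists>C :: nat \<Rightarrow> 'b set.
      C 0 = I \<and> C n = L \<and> (\<forall>i\<le>n. subspace (C i)) \<and> (\<forall>i<n. C i \<subset> C (Suc i))}"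
  have ql: "quot_length scale (span S) (I_SM scale mm S) = Sup Q"
    unfolding quot_length_def Q_def I_def L_def by simp
  have ge: "enat (delta_m scale S) \<le> Sup Q"
  proof (cases "delta_m scale S = 0")
    case True then show ?thesis by (simp add: zero_enat_def[symmetric])
  next
    case False
    define d where "d = delta_m scale S"
    obtain G B N where G: "G \<subseteq> L" "finite B" "card B = d" "independent B" "span B = G"
      "subspace N" "G \<inter> N = {0}" "{g + x | g x. g \<in> G \<and> x \<in> N} = UNIV"
      using Pd unfolding P_def free_of_rank_def direct_summand_def d_def by blast
    have BL: "B \<subseteq> L" using G(1,5) span_superset[of B] by auto
    have md: "mindep scale mm I B (\<lambda>v. v)"
    proof (rule summand_mindep[OF G(6) _ _ G(2,4) Idual])
      show "span B \<inter> N = {0}" using G(5,7) by simp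
      show "{g + x | g x. g \<in> span B \<and> x \<in> N} = UNIV" using G(5,8) by simp
    qed
    obtain e where e: "bij_betw e {..<d} B"
      using ex_bij_betw_nat_finite[OF G(2)] G(3) by (auto simp: lessThan_atLeast0)
    have mde: "mindep scale mm I {..<d} e"
      unfolding mindep_def
    proof (intro allI impI ballI)
      fix r i assume r: "(\<Sum>i\<in>{..<d}. r i *s e i) \<in> I" and i: "i \<in> {..<d}"
      define r' where "r' v = r (the_inv_into {..<d} e v)" for v
      have inj: "inj_on e {..<d}" using e by (simp add: bij_betw_def)
      have "(\<Sum>v\<in>B. r' v *s v) = (\<Sum>i\<in>{..<d}. r' (e i) *s e i)"
        using sum.reindex_bij_betw[OF e, of "\<lambda>v. r' v *s v"] by simp
      also have "\<dots> = (\<Sum>i\<in>{..<d}. r i *s e i)"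
        unfolding r'_def by (rule sum.cong) (auto simp: the_inv_into_f_f[OF inj])
      finally have "(\<Sum>v\<in>B. r' v *s v) \<in> I" using r by simp
      then have "r' (e i) \<in> mm" using md i e unfolding mindep_def by (auto simp: bij_betw_def)
      then show "r i \<in> mm" unfolding r'_def using the_inv_into_f_f[OF inj i] by simp
    qed
    have "\<exists>C. C 0 = I \<and> C d = L \<and> (\<forall>i\<le>d. subspace (C i)) \<and> (\<forall>i<d. C i \<subset> C (Suc i))"
    proof (rule family_chain[OF one _ IS LS IL _ mde])
      show "0 < d" using False d_def by simp
      show "e i \<in> L" if "i < d" for i using that e BL by (auto simp: bij_betw_def)
    qed
    then have "enat d \<in> Q" unfolding Q_def by blast
    then show ?thesis unfolding d_def by (rule Sup_upper)
  qed
  have le: "Sup Q \<le> enat (delta_m scale S)"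
  proof (rule Sup_least)
    fix q assume "q \<in> Q"
    then obtain n C where q: "q = enat n" and C: "C 0 = I" "C n = L" "\<forall>i\<le>n. subspace (C i)" "\<forall>i<n. C i \<subset> C (Suc i)"
      unfolding Q_def by blast
    obtain x where x: "\<forall>i<n. x i \<in> C n" "mindep scale mm I {..<n} x"
      using chain_family[of mm n C I, OF units] C kill by (metis (no_types, lifting))
    have xL: "x i \<in> L" if "i < n" for i using x(1) C(2) that by auto
    have "k \<le> n \<Longrightarrow> P k" for k
    proof (induction k)
      case 0 show ?case by (rule P0)
    next
      case (Suc k)
      then have "P k" by simp
      then obtain G B N where G: "G \<subseteq> L" "finite B" "card B = k" "independent B" "span B = G"
        "subspace N" "G \<inter> N = {0}" "{g + x | g x. g \<in> G \<and> x \<in> N} = UNIV"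
        unfolding P_def free_of_rank_def direct_summand_def by blast
      have "\<exists>i<n. \<not> (\<exists>a. x i - (\<Sum>t\<in>B. a t *s t) \<in> I)"
      proof (rule ccontr)
        assume "\<not> ?thesis"
        then have rep: "\<And>i. i \<in> {..<n} \<Longrightarrow> \<exists>a. x i - (\<Sum>t\<in>B. a t *s t) \<in> I" by auto
        have "card {..<n} \<le> card B"
        proof (rule exchange[OF mmI one units IS G(2) _ rep x(2)])
          fix t r assume "t \<in> B" "r \<in> mm"
          then show "r *s t \<in> I" using kill G(1,5) span_superset[of B] by auto
        qed
        then show False using Suc.prems G(3) by simp
      qed
      then obtain i where i: "i < n" "\<not> (\<exists>a. x i - (\<Sum>t\<in>B. a t *s t) \<in> I)" by blast
      have "\<exists>G. G \<subseteq> span S \<and> free_of_rank scale G (Suc (card B)) \<and> direct_summand scale G"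
      proof (rule extend_summand[OF mmI units G(2,4,6)])
        show "span B \<inter> N = {0}" using G(5,7) by simp
        show "{g + x | g x. g \<in> span B \<and> x \<in> N} = UNIV" using G(5,8) by simp
        show "span B \<subseteq> span S" using G(1,5) unfolding L_def by simp
        show "x i \<in> span S" using xL[OF i(1)] unfolding L_def .
        show "\<not> (\<exists>a. x i - (\<Sum>t\<in>B. a t *s t) \<in> I_SM scale mm S)" using i(2) unfolding I_def .
      qed
      then show ?case using G(3) unfolding P_def L_def by simp
    qed
    then have "n \<le> delta_m scale S" using led by simp
    then show "q \<le> enat (delta_m scale S)" using q by simp
  qed
  show ?thesis using ge le ql by simp
qed

end


theorem lemma3p10:
  fixes sc :: "'a::comm_ring_1 \<Rightarrow> 'm::ab_group_add \<Rightarrow> 'm"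
    and mm :: "'a set"
    and S :: "'m set"
  assumes "module sc"
    and "noetherian_ring TYPE('a)"
    and "local_ring_max mm"
    and "fin_gen_module sc"
  shows "enat (delta_m sc S) = quot_length sc (module.span sc S) (I_SM sc mm S)"
  by (rule module.main_result[OF assms(1) assms(3) assms(4)])

end
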